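(* Fix $k\in\mathbb{Z}_{\geq0}$. For integers $0\leq i\leq r\leq k$, in $\mathcal{A}_k$ we have $$h_{r-i}e_i=\underline{V_i^r}+\underline{V_{i-1}^r}+\underline{U_{i-1}^r}.$$
   Context: Indices are elements of $\mathbb{Z}/(k+1)\mathbb{Z}$, identified with $[0,k]$. $\mathcal{A}_k$ is the associative $\mathbb{Z}$-algebra with generators $A_0,\dots,A_k$ subject only to $A_iA_{i+1}A_i=A_{i+1}A_iA_{i+1}$ for all $i$ and $A_iA_j=A_jA_i$ whenever $i-j\not\equiv\pm1\pmod{k+1}$. A word $A_{i_1\dots i_m}$ is a sequence of indices with value $A_{i_1}\cdots A_{i_m}$, weak length $m$ and support $\{i_1,\dots,i_m\}$. For a proper subset $A\subsetneq[0,k]$ with $|A|=s$, $d_A=A_{i_1\dots i_s}$ and $i_A=A_{i_s\dots i_1}$, where $(i_1,\dots,i_s)$ is any ordering of $A$ such that whenever $i,i+1\in A$, $i+1$ occurs before $i$ (these do not depend on the choice; $d_\emptyset=i_\emptyset=1$). Noncommutative symmetric functions: $h_s=\sum_{A\in\binom{[0,k]}{s}}d_A$ and $e_s=\sum_{A\in\binom{[0,k]}{s}}i_A$. For a proper subset $S$, with $a$ the smallest element of $[0,k]$ not in $S$, $I_S$ is the total order $a+1<\dots<k<0<\dots<a-1$. A word $u=A_{i_1\dots i_m}$ with proper support is a weak hook word of hook type $V$ (resp. $U$) if with respect to $I_{supp(u)}$, for some $j$, $i_1>\dots>i_j<i_{j+1}<\dots<i_m$ (resp. $i_1>\dots>i_j=i_{j+1}<\dots<i_m$);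 $asc(u)$ is the number of $t$ with $i_t<i_{t+1}$. $X^r_i$ ($X\in\{U,V\}$) is the set of weak hook words of hook type $X$, length $r$, and $asc=i$ (empty for $i<0$). For a finite set $S$ of words, $\underline{S}=\sum_{u\in S}u\in\mathcal{A}_k$. *)

theory Defs
  imports Main "HOL-Library.Function_Algebras"
begin

text \<open>Elements of the free associative Z-algebra on generators A_0,...,A_k are
  represented as integer coefficient functions on words (lists of indices);
  the word [i1,...,im] stands for A_{i1}...A_{im}. Only finitely supported
  functions arise below.\<close>

type_synonym elt = "nat list \<Rightarrow> int"

definition word :: "nat list \<Rightarrow> elt" where
  "word u = (\<lambda>w. if w = u then 1 else 0)"

definition amul :: "elt \<Rightarrow> elt \<Rightarrow> elt" where
  "amul f g = (\<lambda>w. \<Sum>j\<in>{0..length w}. f (take j w) * g (drop j w))"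

definition wsum :: "nat list set \<Rightarrow> elt" where
  "wsum S = (\<Sum>u\<in>S. word u)"

definition csuc :: "nat \<Rightarrow> nat \<Rightarrow> nat" where
  "csuc k i = (i + 1) mod (k + 1)"

definition cadj :: "nat \<Rightarrow> nat \<Rightarrow> nat \<Rightarrow> bool" where
  "cadj k i j \<longleftrightarrow> j = csuc k i \<or> i = csuc k j"

definition rels :: "nat \<Rightarrow> (nat list \<times> nat list) set" where
  "rels k = {([i, csuc k i, i], [csuc k i, i, csuc k i]) | i. i \<le> k}
          \<union> {([i, j], [j, i]) | i j. i \<le> k \<and> j \<le> k \<and> \<not> cadj k i j}"

inductive_set rel_ideal :: "nat \<Rightarrow> elt set" for k :: nat where
  zero: "0 \<in> rel_ideal k"
| gen: "(u, v) \<in> rels k \<Longrightarrow> set a \<subseteq> {0..k} \<Longrightarrow> set b \<subseteq> {0..k} \<Longrightarrow>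
        word (a @ u @ b) - word (a @ v @ b) \<in> rel_ideal k"
| add: "f \<in> rel_ideal k \<Longrightarrow> g \<in> rel_ideal k \<Longrightarrow> f + g \<in> rel_ideal k"
| neg: "f \<in> rel_ideal k \<Longrightarrow> - f \<in> rel_ideal k"

definition A_eq :: "nat \<Rightarrow> elt \<Rightarrow> elt \<Rightarrow> bool" where
  "A_eq k x y \<longleftrightarrow> x - y \<in> rel_ideal k"

definition dec_order :: "nat \<Rightarrow> nat set \<Rightarrow> nat list \<Rightarrow> bool" where
  "dec_order k A xs \<longleftrightarrow> distinct xs \<and> set xs = A \<and>
     (\<forall>p < length xs. \<forall>q < length xs. xs ! p = csuc k (xs ! q) \<and> p \<noteq> q \<longrightarrow> p < q)"

definition d_word :: "nat \<Rightarrow> nat set \<Rightarrow> nat list" where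
  "d_word k A = (SOME xs. dec_order k A xs)"

definition h_sym :: "nat \<Rightarrow> nat \<Rightarrow> elt" where
  "h_sym k s = (\<Sum>A\<in>{A. A \<subseteq> {0..k} \<and> card A = s}. word (d_word k A))"

definition e_sym :: "nat \<Rightarrow> nat \<Rightarrow> elt" where
  "e_sym k s = (\<Sum>A\<in>{A. A \<subseteq> {0..k} \<and> card A = s}. word (rev (d_word k A)))"

text \<open>Position of x in the total order I_S: a+1 < ... < k < 0 < ... < a-1,
  a the least element of [0,k] not in S.\<close>
definition I_pos :: "nat \<Rightarrow> nat set \<Rightarrow> nat \<Rightarrow> nat" where
  "I_pos k S x = (let a = Min ({0..k} - S) in (x + (k + 1) - (a + 1)) mod (k + 1))"

definition I_less :: "nat \<Rightarrow> nat set \<Rightarrow> nat \<Rightarrow> nat \<Rightarrow> bool" where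
  "I_less k S x y \<longleftrightarrow> I_pos k S x < I_pos k S y"

text \<open>u = [i_1,...,i_m]; u ! s = i_{s+1}.  Hook type V: for some 1 <= j (j <= m when m >= 1),
  i_1 > ... > i_j < i_{j+1} < ... < i_m w.r.t. I_supp(u).\<close>
definition hookV :: "nat \<Rightarrow> nat list \<Rightarrow> bool" where
  "hookV k u \<longleftrightarrow> set u \<subset> {0..k} \<and>
     (\<exists>j. 1 \<le> j \<and> j \<le> max (length u) 1 \<and>
        (\<forall>s. s + 1 < j \<longrightarrow> I_less k (set u) (u ! (s + 1)) (u ! s)) \<and>
        (\<forall>s. j \<le> s + 1 \<and> s + 1 < length u \<longrightarrow> I_less k (set u) (u ! s) (u ! (s + 1))))"

definition hookU :: "nat \<Rightarrow> nat list \<Rightarrow> bool" where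
  "hookU k u \<longleftrightarrow> set u \<subset> {0..k} \<and>
     (\<exists>j. 1 \<le> j \<and> j + 1 \<le> length u \<and>
        (\<forall>s. s + 1 < j \<longrightarrow> I_less k (set u) (u ! (s + 1)) (u ! s)) \<and>
        u ! (j - 1) = u ! j \<and>
        (\<forall>s. j + 1 \<le> s + 1 \<and> s + 1 < length u \<longrightarrow> I_less k (set u) (u ! s) (u ! (s + 1))))"

definition asc :: "nat \<Rightarrow> nat list \<Rightarrow> nat" where
  "asc k u = card {s. s + 1 < length u \<and> I_less k (set u) (u ! s) (u ! (s + 1))}"

text \<open>X^r_i (empty for i < 0, hence the integer index).\<close>
definition Vset :: "nat \<Rightarrow> nat \<Rightarrow> int \<Rightarrow> nat list set" where
  "Vset k r i = {u. hookV k u \<and> length u = r \<and> int (asc k u) = i}"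

definition Uset :: "nat \<Rightarrow> nat \<Rightarrow> int \<Rightarrow> nat list set" where
  "Uset k r i = {u. hookU k u \<and> length u = r \<and> int (asc k u) = i}"

end

theory Submission
  imports Defs
begin

lemma sum_fun_apply: "(\<Sum>a\<in>F. (f a :: elt)) w = (\<Sum>a\<in>F. f a w)"
  by (induction F rule: infinite_finite_induct) auto

lemma amul_sum_left: "amul (\<Sum>a\<in>F. f a) g = (\<Sum>a\<in>F. amul (f a) g)"
  unfolding amul_def by (rule ext) (simp add: sum_fun_apply sum_distrib_right; rule sum.swap)

lemma amul_sum_right: "amul g (\<Sum>a\<in>F. f a) = (\<Sum>a\<in>F. amul g (f a))"
  unfolding amul_def by (rule ext) (simp add: sum_fun_apply sum_distrib_left; rule sum.swap)

lemma amul_word: "amul (word u) (word v) = word (u @ v)"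
proof (rule ext)
  fix w
  have "amul (word u) (word v) w = (\<Sum>j\<in>{0..length w}. if j = length u then (if w = u @ v then 1 else 0) else 0)"
    unfolding amul_def word_def
  proof (rule sum.cong[OF refl])
    fix j assume j: "j \<in> {0..length w}"
    show "(if take j w = u then 1 else 0) * (if drop j w = v then 1 else 0) =
      (if j = length u then if w = u @ v then 1 else 0 else (0::int))"
    proof (cases "take j w = u \<and> drop j w = v")
      case True
      then have "j = length u" "w = u @ v" using j by auto
      then show ?thesis using True by simp
    next
      case False
      have "\<not> (j = length u \<and> w = u @ v)" using False by auto
      then show ?thesis using False by auto
    qed
  qed
  also have "\<dots> = word (u @ v) w"
    by (auto simp: word_def)
  finally show "amul (word u) (word v) w = word (u @ v) w" .
qed

lemma ideal_sum: "(\<And>a. a \<in> F \<Longrightarrow> f a \<in> rel_ideal k) \<Longrightarrow> (\<Sum>a\<in>F. f a) \<in> rel_ideal k"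
  by (induction F rule: infinite_finite_induct) (auto intro: rel_ideal.intros)

lemma A_eq_sum: "(\<And>a. a \<in> F \<Longrightarrow> A_eq k (f a) (g a)) \<Longrightarrow> A_eq k (\<Sum>a\<in>F. f a) (\<Sum>a\<in>F. g a)"
  unfolding A_eq_def by (simp add: sum_subtractf[symmetric] ideal_sum)

lemma A_eq_trans: "A_eq k x y \<Longrightarrow> A_eq k y z \<Longrightarrow> A_eq k x z"
  unfolding A_eq_def using rel_ideal.add by fastforce

lemma A_eq_refl: "A_eq k x x"
  unfolding A_eq_def by (simp add: rel_ideal.zero)

lemma A_eq_cong: "x = x' \<Longrightarrow> y = y' \<Longrightarrow> A_eq k x' y' \<Longrightarrow> A_eq k x y" by simp

definition sw1 :: "nat \<Rightarrow> nat list \<Rightarrow> nat list \<Rightarrow> bool" where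
  "sw1 k u v \<longleftrightarrow> (\<exists>a b x y. u = a @ [x, y] @ b \<and> v = a @ [y, x] @ b \<and> x \<le> k \<and> y \<le> k \<and>
      \<not> cadj k x y \<and> set a \<subseteq> {0..k} \<and> set b \<subseteq> {0..k})"

abbreviation swq :: "nat \<Rightarrow> nat list \<Rightarrow> nat list \<Rightarrow> bool" where
  "swq k \<equiv> (sw1 k)\<^sup>*\<^sup>*"

lemma sw1_ideal: "sw1 k u v \<Longrightarrow> word u - word v \<in> rel_ideal k"
  unfolding sw1_def
proof (elim exE conjE)
  fix a b x y assume h: "u = a @ [x, y] @ b" "v = a @ [y, x] @ b" "x \<le> k" "y \<le> k"
    "\<not> cadj k x y" "set a \<subseteq> {0..k}" "set b \<subseteq> {0..k}"
  have "([x, y], [y, x]) \<in> rels k" using h unfolding rels_def by blast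
  then show ?thesis using h rel_ideal.gen by blast
qed

lemma swq_A_eq: "swq k u v \<Longrightarrow> A_eq k (word u) (word v)"
proof (induction rule: rtranclp_induct)
  case base then show ?case by (rule A_eq_refl)
next
  case (step y z)
  then show ?case unfolding A_eq_def
    using rel_ideal.add[OF step.IH[unfolded A_eq_def] sw1_ideal[OF step.hyps(2)]] by simp
qed

lemma cadj_sym: "cadj k x y = cadj k y x" unfolding cadj_def by auto

lemma sw1_ctx: "sw1 k u v \<Longrightarrow> set c \<subseteq> {0..k} \<Longrightarrow> set d \<subseteq> {0..k} \<Longrightarrow> sw1 k (c @ u @ d) (c @ v @ d)"
  unfolding sw1_def
proof (elim exE conjE)
  fix a b x y assume h: "u = a @ [x, y] @ b" "v = a @ [y, x] @ b" "x \<le> k" "y \<le> k"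
    "\<not> cadj k x y" "set a \<subseteq> {0..k}" "set b \<subseteq> {0..k}" and c: "set c \<subseteq> {0..k}" "set d \<subseteq> {0..k}"
  show "\<exists>a b x y. c @ u @ d = a @ [x, y] @ b \<and> c @ v @ d = a @ [y, x] @ b \<and> x \<le> k \<and> y \<le> k \<and>
      \<not> cadj k x y \<and> set a \<subseteq> {0..k} \<and> set b \<subseteq> {0..k}"
    by (rule exI[of _ "c @ a"], rule exI[of _ "b @ d"], rule exI[of _ x], rule exI[of _ y]) (use h c in auto)
qed

lemma swq_ctx: "swq k u v \<Longrightarrow> set c \<subseteq> {0..k} \<Longrightarrow> set d \<subseteq> {0..k} \<Longrightarrow> swq k (c @ u @ d) (c @ v @ d)"
proof (induction rule: rtranclp_induct)
  case base then show ?case by simp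
next
  case (step y z)
  then show ?case using sw1_ctx[OF step.hyps(2)] by (meson rtranclp.rtrancl_into_rtrancl)
qed

lemma sw1_set: "sw1 k u v \<Longrightarrow> set u = set v"
  unfolding sw1_def by auto

lemma swq_set: "swq k u v \<Longrightarrow> set u = set v"
  by (induction rule: rtranclp_induct) (auto dest: sw1_set)

lemma swq_app: "swq k u u' \<Longrightarrow> swq k v v' \<Longrightarrow> set u \<subseteq> {0..k} \<Longrightarrow> set v \<subseteq> {0..k} \<Longrightarrow>
   swq k (u @ v) (u' @ v')"
proof -
  assume a: "swq k u u'" "swq k v v'" "set u \<subseteq> {0..k}" "set v \<subseteq> {0..k}"
  have 1: "swq k ([] @ u @ v) ([] @ u' @ v)" using swq_ctx[OF a(1), of "[]" v] a by simp
  have 2: "swq k (u' @ v @ []) (u' @ v' @ [])" using swq_ctx[OF a(2), of u' "[]"] a swq_set[OF a(1)] by simp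
  show ?thesis using 1 2 by simp
qed

lemma sw1_rev: "sw1 k u v \<Longrightarrow> sw1 k (rev u) (rev v)"
  unfolding sw1_def
proof (elim exE conjE)
  fix a b x y assume h: "u = a @ [x, y] @ b" "v = a @ [y, x] @ b" "x \<le> k" "y \<le> k"
    "\<not> cadj k x y" "set a \<subseteq> {0..k}" "set b \<subseteq> {0..k}"
  show "\<exists>a b x y. rev u = a @ [x, y] @ b \<and> rev v = a @ [y, x] @ b \<and> x \<le> k \<and> y \<le> k \<and>
      \<not> cadj k x y \<and> set a \<subseteq> {0..k} \<and> set b \<subseteq> {0..k}"
    by (rule exI[of _ "rev b"], rule exI[of _ "rev a"], rule exI[of _ y], rule exI[of _ x]) (use h cadj_sym in auto)
qed

lemma swq_rev: "swq k u v \<Longrightarrow> swq k (rev u) (rev v)"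
proof (induction rule: rtranclp_induct)
  case base then show ?case by simp
next
  case (step y z)
  then show ?case using sw1_rev[OF step.hyps(2)] by (meson rtranclp.rtrancl_into_rtrancl)
qed

definition amin :: "nat \<Rightarrow> nat set \<Rightarrow> nat" where
  "amin k S = Min ({0..k} - S)"

lemma amin_props: assumes "S \<subset> {0..k}" shows "amin k S \<le> k" "amin k S \<notin> S"
proof -
  have ne: "{0..k} - S \<noteq> {}" using assms by auto
  have "amin k S \<in> {0..k} - S" unfolding amin_def using Min_in[OF _ ne] by auto
  then show "amin k S \<le> k" "amin k S \<notin> S" by auto
qed

lemma I_pos_closed: assumes "S \<subset> {0..k}" "x \<le> k"
  shows "I_pos k S x = (if amin k S < x then x - amin k S - 1 else x + k - amin k S)"
proof -
  define a where "a = amin k S"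
  have a: "a \<le> k" using amin_props[OF assms(1)] a_def by auto
  have "I_pos k S x = (x + (k + 1) - (a + 1)) mod (k + 1)"
    unfolding I_pos_def a_def amin_def Let_def by simp
  also have "\<dots> = (if a < x then x - a - 1 else x + k - a)"
  proof (cases "a < x")
    case True
    have "x + (k + 1) - (a + 1) = (x - a - 1) + (k + 1)" using True a by simp
    then have "(x + (k + 1) - (a + 1)) mod (k + 1) = (x - a - 1) mod (k + 1)"
      by (metis mod_add_self2)
    also have "\<dots> = x - a - 1" using assms(2) by simp
    finally show ?thesis using True by simp
  next
    case False
    then show ?thesis using a by simp
  qed
  finally show ?thesis unfolding a_def .
qed

lemma I_pos_lt: assumes "S \<subset> {0..k}" "x \<le> k" shows "I_pos k S x \<le> k"
  using I_pos_closed[OF assms] amin_props[OF assms(1)] assms(2) by auto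

lemma I_pos_inj: assumes "S \<subset> {0..k}" "x \<le> k" "y \<le> k" "I_pos k S x = I_pos k S y"
  shows "x = y"
  using assms(2,3,4) I_pos_closed[OF assms(1,2)] I_pos_closed[OF assms(1,3)] amin_props[OF assms(1)]
  by (auto split: if_splits)

lemma csuc_le: "csuc k y \<le> k"
proof -
  have "(y + 1) mod (k + 1) < k + 1" by simp
  then show ?thesis unfolding csuc_def by linarith
qed

lemma I_pos_csuc: assumes "S \<subset> {0..k}" "y \<in> S"
  shows "I_pos k S (csuc k y) = Suc (I_pos k S y)"
proof -
  have y: "y \<le> k" using assms by auto
  have ya: "y \<noteq> amin k S" using amin_props[OF assms(1)] assms(2) by auto
  have a: "amin k S \<le> k" using amin_props[OF assms(1)] by auto
  show ?thesis
  proof (cases "y = k")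
    case True
    then have "csuc k y = 0" unfolding csuc_def by simp
    then show ?thesis using I_pos_closed[OF assms(1) y] I_pos_closed[OF assms(1), of 0] True ya a by auto
  next
    case False
    then have c: "csuc k y = y + 1" unfolding csuc_def using y by simp
    show ?thesis using I_pos_closed[OF assms(1) y] I_pos_closed[OF assms(1), of "y+1"] c False y ya a
      by auto
  qed
qed

lemma I_less_trans: "I_less k S x y \<Longrightarrow> I_less k S y z \<Longrightarrow> I_less k S x z"
  unfolding I_less_def by simp

lemma I_less_asym: "I_less k S x y \<Longrightarrow> \<not> I_less k S y x"
  unfolding I_less_def by simp

lemma I_less_irrefl: "\<not> I_less k S x x"
  unfolding I_less_def by simp

lemma I_less_total: "S \<subset> {0..k} \<Longrightarrow> x \<le> k \<Longrightarrow> y \<le> k \<Longrightarrow> I_less k S x y \<or> x = y \<or> I_less k S y x"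
  unfolding I_less_def using I_pos_inj by (metis linorder_neqE_nat)

definition ascL :: "nat \<Rightarrow> nat set \<Rightarrow> nat set \<Rightarrow> nat list" where
  "ascL k S A = sort_key (I_pos k S) (sorted_list_of_set A)"

definition descL :: "nat \<Rightarrow> nat set \<Rightarrow> nat set \<Rightarrow> nat list" where
  "descL k S A = rev (ascL k S A)"

abbreviation Rinc where "Rinc k S \<equiv> I_less k S"
abbreviation Rdec where "Rdec k S \<equiv> (\<lambda>x y. I_less k S y x)"

lemma ascL_set: "finite A \<Longrightarrow> set (ascL k S A) = A"
  unfolding ascL_def by simp

lemma ascL_distinct: "finite A \<Longrightarrow> distinct (ascL k S A)"
  unfolding ascL_def by simp

lemma ascL_length: "finite A \<Longrightarrow> length (ascL k S A) = card A"
  unfolding ascL_def by simp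

lemma descL_set: "finite A \<Longrightarrow> set (descL k S A) = A"
  unfolding descL_def by (simp add: ascL_set)

lemma descL_distinct: "finite A \<Longrightarrow> distinct (descL k S A)"
  unfolding descL_def by (simp add: ascL_distinct)

lemma descL_length: "finite A \<Longrightarrow> length (descL k S A) = card A"
  unfolding descL_def by (simp add: ascL_length)

lemma ascL_sorted: assumes "A \<subseteq> S" "S \<subset> {0..k}"
  shows "sorted_wrt (Rinc k S) (ascL k S A)"
proof -
  have fin: "finite A" using assms finite_subset by (metis finite_atLeastAtMost psubset_imp_subset)
  have inj: "inj_on (I_pos k S) A"
  proof (rule inj_onI)
    fix x y assume "x \<in> A" "y \<in> A" "I_pos k S x = I_pos k S y"
    moreover have "x \<le> k" "y \<le> k" using assms \<open>x \<in> A\<close> \<open>y \<in> A\<close> by auto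
    ultimately show "x = y" using I_pos_inj[OF assms(2)] by blast
  qed
  let ?xs = "ascL k S A"
  have "sorted (map (I_pos k S) ?xs)" unfolding ascL_def by simp
  moreover have "distinct (map (I_pos k S) ?xs)"
    using inj ascL_distinct[OF fin] ascL_set[OF fin] by (simp add: distinct_map)
  ultimately have "sorted_wrt (<) (map (I_pos k S) ?xs)" by (simp add: strict_sorted_iff)
  then show ?thesis unfolding I_less_def by (simp add: sorted_wrt_map)
qed

lemma descL_sorted: assumes "A \<subseteq> S" "S \<subset> {0..k}"
  shows "sorted_wrt (Rdec k S) (descL k S A)"
  unfolding descL_def sorted_wrt_rev using ascL_sorted[OF assms] .

lemma sorted_wrt_unique:
  assumes asym: "\<And>x y. R x y \<Longrightarrow> \<not> R y x"
  shows "sorted_wrt R xs \<Longrightarrow> sorted_wrt R ys \<Longrightarrow> set xs = set ys \<Longrightarrow> xs = ys"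
proof (induction xs arbitrary: ys)
  case Nil then show ?case by simp
next
  case (Cons x xs)
  then obtain y ys' where ys: "ys = y # ys'" by (cases ys) auto
  have irr: "\<And>z. \<not> R z z" using asym by blast
  have xy: "x = y"
  proof (rule ccontr)
    assume "x \<noteq> y"
    moreover have "x \<in> set ys" "y \<in> set (x # xs)" using Cons.prems(3) ys by auto
    ultimately have "x \<in> set ys'" "y \<in> set xs" using ys by auto
    then have "R y x" "R x y" using Cons.prems ys by auto
    then show False using asym by blast
  qed
  have "x \<notin> set xs" using Cons.prems(1) irr by auto
  moreover have "y \<notin> set ys'" using Cons.prems(2) irr ys by auto
  ultimately have "set xs = set ys'" using Cons.prems(3) ys xy by auto
  then have "xs = ys'" using Cons.IH Cons.prems ys by auto
  then show ?case using xy ys by simp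
qed

lemma ascL_unique: assumes "sorted_wrt (Rinc k S) xs" "set xs = A"
  "A \<subseteq> S" "S \<subset> {0..k}" shows "xs = ascL k S A"
  by (rule sorted_wrt_unique[of "Rinc k S"]) (use I_less_asym assms ascL_sorted[OF assms(3,4)] ascL_set
     finite_subset[of A "{0..k}"] in auto)

lemma descL_unique: assumes "sorted_wrt (Rdec k S) xs" "set xs = A"
  "A \<subseteq> S" "S \<subset> {0..k}" shows "xs = descL k S A"
  by (rule sorted_wrt_unique[of "Rdec k S"]) (use I_less_asym assms descL_sorted[OF assms(3,4)] descL_set
     finite_subset[of A "{0..k}"] in auto)

lemma descL_dec_order: assumes "A \<subset> {0..k}" shows "dec_order k A (descL k A A)"
proof -
  have fin: "finite A" using assms finite_subset by (metis finite_atLeastAtMost psubset_imp_subset)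
  let ?xs = "descL k A A"
  have s: "sorted_wrt (Rdec k A) ?xs" using descL_sorted[OF _ assms] by simp
  have "p < q" if "p < length ?xs" "q < length ?xs" "?xs ! p = csuc k (?xs ! q)" "p \<noteq> q" for p q
  proof (rule ccontr)
    assume "\<not> p < q"
    then have "q < p" using that by simp
    then have "I_less k A (?xs ! p) (?xs ! q)" using s that sorted_wrt_nth_less by fastforce
    moreover have "?xs ! q \<in> A" using that descL_set[OF fin] nth_mem by metis
    then have "I_pos k A (?xs ! p) = Suc (I_pos k A (?xs ! q))" using that I_pos_csuc[OF assms] by simp
    ultimately show False unfolding I_less_def by simp
  qed
  then show ?thesis unfolding dec_order_def using descL_distinct[OF fin] descL_set[OF fin] by blast
qed

lemma d_word_dec: assumes "A \<subset> {0..k}" shows "dec_order k A (d_word k A)"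
  unfolding d_word_def using descL_dec_order[OF assms] by (rule someI)

lemma insert_swap: "x \<le> k \<Longrightarrow> (\<forall>y\<in>set P. y \<le> k \<and> \<not> cadj k x y) \<Longrightarrow> set Q \<subseteq> {0..k} \<Longrightarrow>
   swq k (x # P @ Q) (P @ x # Q)"
proof (induction P)
  case Nil then show ?case by simp
next
  case (Cons y P)
  have 1: "sw1 k (x # y # P @ Q) (y # x # P @ Q)"
    unfolding sw1_def
    by (rule exI[of _ "[]"], rule exI[of _ "P @ Q"], rule exI[of _ x], rule exI[of _ y]) (use Cons.prems in auto)
  have "swq k (x # P @ Q) (P @ x # Q)" using Cons by auto
  then have 2: "swq k ([y] @ (x # P @ Q) @ []) ([y] @ (P @ x # Q) @ [])"
    by (rule swq_ctx) (use Cons.prems in auto)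
  show ?case using 1 2 by (simp add: converse_rtranclp_into_rtranclp)
qed

lemma dec_swq: "distinct xs \<Longrightarrow> set xs \<subseteq> S \<Longrightarrow> S \<subset> {0..k} \<Longrightarrow>
  (\<forall>p<length xs. \<forall>q<length xs. xs ! p = csuc k (xs ! q) \<and> p \<noteq> q \<longrightarrow> p < q) \<Longrightarrow>
  swq k xs (descL k S (set xs))"
proof (induction xs)
  case Nil then show ?case by (simp add: descL_def ascL_def)
next
  case (Cons x xs)
  have Sk: "S \<subseteq> {0..k}" using Cons.prems(3) by (rule psubset_imp_subset)
  have condxs: "\<forall>p<length xs. \<forall>q<length xs. xs ! p = csuc k (xs ! q) \<and> p \<noteq> q \<longrightarrow> p < q"
  proof (intro allI impI)
    fix p q assume "p < length xs" "q < length xs" "xs ! p = csuc k (xs ! q) \<and> p \<noteq> q"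
    then have "Suc p < Suc q" using Cons.prems(4) by (metis Suc_inject length_Cons nth_Cons_Suc Suc_mono)
    then show "p < q" by simp
  qed
  define D' where "D' = descL k S (set xs)"
  have IH: "swq k xs D'" unfolding D'_def
  proof (rule Cons.IH)
    show "distinct xs" using Cons.prems(1) by simp
    show "set xs \<subseteq> S" using Cons.prems(2) by simp
  qed (use Cons.prems(3) condxs in blast)+
  have finxs: "finite (set xs)" by simp
  have D'set: "set D' = set xs" unfolding D'_def by (rule descL_set[OF finxs])
  have D'sort: "sorted_wrt (Rdec k S) D'" unfolding D'_def
    by (rule descL_sorted) (use Cons.prems(2,3) in auto)
  define P where "P = takeWhile (\<lambda>y. I_less k S x y) D'"
  define Q where "Q = dropWhile (\<lambda>y. I_less k S x y) D'"
  have PQ: "D' = P @ Q" unfolding P_def Q_def by simp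
  have xnot: "x \<notin> set xs" using Cons.prems(1) by simp
  have xS: "x \<in> S" using Cons.prems(2) by simp
  have Pgood: "\<forall>y\<in>set P. y \<le> k \<and> \<not> cadj k x y"
  proof
    fix y assume yP: "y \<in> set P"
    have yD: "y \<in> set D'" and lxy: "I_less k S x y"
      using set_takeWhileD[OF yP[unfolded P_def]] by auto
    have yxs: "y \<in> set xs" using yD D'set by simp
    have yS: "y \<in> S" using yxs Cons.prems(2) by auto
    have n1: "y \<noteq> csuc k x"
    proof
      assume h: "y = csuc k x"
      obtain m where m: "m < length xs" "xs ! m = y" using yxs by (meson in_set_conv_nth)
      have "(x # xs) ! Suc m = csuc k ((x # xs) ! 0) \<and> Suc m \<noteq> 0" using m h by simp
      moreover have "Suc m < length (x # xs)" "0 < length (x # xs)" using m by auto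
      ultimately have "Suc m < 0" using Cons.prems(4) by blast
      then show False by simp
    qed
    have n2: "x \<noteq> csuc k y"
    proof
      assume "x = csuc k y"
      then have "I_pos k S x = Suc (I_pos k S y)" using I_pos_csuc[OF Cons.prems(3) yS] by simp
      then show False using lxy unfolding I_less_def by simp
    qed
    show "y \<le> k \<and> \<not> cadj k x y" using yS Sk n1 n2 unfolding cadj_def by auto
  qed
  have Qlt: "\<forall>z\<in>set Q. I_less k S z x"
  proof (cases Q)
    case Nil then show ?thesis by simp
  next
    case QC: (Cons q Q')
    have ne: "dropWhile (\<lambda>y. I_less k S x y) D' \<noteq> []" using QC unfolding Q_def by simp
    have hq: "hd (dropWhile (\<lambda>y. I_less k S x y) D') = q" using QC unfolding Q_def by simp
    have nq: "\<not> I_less k S x q" using hd_dropWhile[OF ne] unfolding hq .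
    have "q \<in> set Q" using QC by simp
    then have qxs: "q \<in> set xs" using PQ D'set by (metis Un_iff set_append)
    have "q \<noteq> x" using qxs xnot by auto
    moreover have "q \<le> k" "x \<le> k" using qxs xS Sk Cons.prems(2) by auto
    ultimately have qx: "I_less k S q x" using I_less_total[OF Cons.prems(3), of x q] nq by blast
    have "sorted_wrt (Rdec k S) (P @ Q)" using D'sort PQ by simp
    then have "sorted_wrt (Rdec k S) Q" unfolding sorted_wrt_append by blast
    then have "\<forall>z\<in>set Q'. I_less k S z q" unfolding QC by simp
    then have "\<forall>z\<in>set Q'. I_less k S z x" using qx I_less_trans by blast
    then show ?thesis unfolding QC using qx by simp
  qed
  have sortPxQ: "sorted_wrt (Rdec k S) (P @ x # Q)"
  proof -
    have "sorted_wrt (Rdec k S) (P @ Q)" using D'sort PQ by simp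
    then have "sorted_wrt (Rdec k S) P" "sorted_wrt (Rdec k S) Q" "\<forall>a\<in>set P. \<forall>b\<in>set Q. I_less k S b a"
      unfolding sorted_wrt_append by blast+
    moreover have "\<forall>a\<in>set P. I_less k S x a" unfolding P_def by (auto dest: set_takeWhileD)
    ultimately show ?thesis using Qlt by (auto simp: sorted_wrt_append)
  qed
  have setPxQ: "set (P @ x # Q) = set (x # xs)" using PQ D'set by auto
  have eq: "P @ x # Q = descL k S (set (x # xs))"
    by (rule descL_unique[OF sortPxQ setPxQ]) (use Cons.prems(2,3) in auto)
  have 1: "swq k ([x] @ xs @ []) ([x] @ D' @ [])" by (rule swq_ctx[OF IH]) (use xS Sk in auto)
  have 2: "swq k (x # P @ Q) (P @ x # Q)"
    by (rule insert_swap) (use xS Sk Pgood PQ D'set Cons.prems(2) in auto)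
  have "swq k (x # xs) (x # P @ Q)" using 1 PQ by simp
  then have "swq k (x # xs) (P @ x # Q)" using 2 by (rule rtranclp_trans)
  then show ?case using eq by simp
qed

lemma d_word_swq: assumes "A \<subseteq> S" "S \<subset> {0..k}"
  shows "swq k (d_word k A) (descL k S A)"
proof -
  have Ap: "A \<subset> {0..k}" using assms by auto
  have d: "dec_order k A (d_word k A)" by (rule d_word_dec[OF Ap])
  then have "distinct (d_word k A)" "set (d_word k A) = A"
    "\<forall>p<length (d_word k A). \<forall>q<length (d_word k A). d_word k A ! p = csuc k (d_word k A ! q) \<and> p \<noteq> q \<longrightarrow> p < q"
    unfolding dec_order_def by blast+
  then show ?thesis using dec_swq[of "d_word k A" S k] assms by simp
qed

lemma rev_d_word_swq: assumes "A \<subseteq> S" "S \<subset> {0..k}"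
  shows "swq k (rev (d_word k A)) (ascL k S A)"
  using swq_rev[OF d_word_swq[OF assms]] unfolding descL_def by simp

definition decp :: "nat \<Rightarrow> nat list \<Rightarrow> nat \<Rightarrow> bool" where
  "decp k u j \<longleftrightarrow> (\<forall>s. s + 1 < j \<longrightarrow> I_less k (set u) (u ! (s + 1)) (u ! s))"

definition incp :: "nat \<Rightarrow> nat list \<Rightarrow> nat \<Rightarrow> bool" where
  "incp k u j \<longleftrightarrow> (\<forall>s. j \<le> s + 1 \<and> s + 1 < length u \<longrightarrow> I_less k (set u) (u ! s) (u ! (s + 1)))"

lemma hookV_iff: "hookV k u \<longleftrightarrow> set u \<subset> {0..k} \<and>
   (\<exists>j. 1 \<le> j \<and> j \<le> max (length u) 1 \<and> decp k u j \<and> incp k u j)"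
  unfolding hookV_def decp_def incp_def by blast

lemma hookU_iff: "hookU k u \<longleftrightarrow> set u \<subset> {0..k} \<and>
   (\<exists>j. 1 \<le> j \<and> j + 1 \<le> length u \<and> decp k u j \<and> u ! (j - 1) = u ! j \<and> incp k u (j + 1))"
  unfolding hookU_def decp_def incp_def by auto

lemma transp_inc: "transp (Rinc k S)"
  unfolding transp_def using I_less_trans by blast

lemma transp_dec: "transp (Rdec k S)"
  unfolding transp_def using I_less_trans by blast

lemma decp_sorted: assumes "j \<le> max (length u) 1"
  shows "decp k u j \<longleftrightarrow> sorted_wrt (Rdec k (set u)) (take j u)"
proof -
  have L: "Suc s < length (take j u) \<longleftrightarrow> Suc s < j" for s using assms by auto
  show ?thesis
    unfolding sorted_wrt_iff_nth_Suc_transp[OF transp_dec] decp_def L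
    by (auto simp: nth_take)
qed

lemma incp_sorted: assumes "1 \<le> j"
  shows "incp k u j \<longleftrightarrow> sorted_wrt (Rinc k (set u)) (drop (j - 1) u)"
proof
  assume h: "incp k u j"
  show "sorted_wrt (Rinc k (set u)) (drop (j - 1) u)"
    unfolding sorted_wrt_iff_nth_Suc_transp[OF transp_inc]
  proof (intro allI impI)
    fix t assume t: "Suc t < length (drop (j - 1) u)"
    have "j \<le> (j - 1 + t) + 1 \<and> (j - 1 + t) + 1 < length u" using t assms by auto
    then have "I_less k (set u) (u ! (j - 1 + t)) (u ! (j - 1 + t + 1))"
      using h unfolding incp_def by blast
    then show "I_less k (set u) (drop (j - 1) u ! t) (drop (j - 1) u ! Suc t)"
      using t by simp
  qed
next
  assume h: "sorted_wrt (Rinc k (set u)) (drop (j - 1) u)"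
  show "incp k u j" unfolding incp_def
  proof (intro allI impI)
    fix s assume s: "j \<le> s + 1 \<and> s + 1 < length u"
    define t where "t = s - (j - 1)"
    have st: "s = j - 1 + t" using s assms t_def by auto
    have "Suc t < length (drop (j - 1) u)" using s st by auto
    then have "I_less k (set u) (drop (j - 1) u ! t) (drop (j - 1) u ! Suc t)"
      using h unfolding sorted_wrt_iff_nth_Suc_transp[OF transp_inc] by blast
    then show "I_less k (set u) (u ! s) (u ! (s + 1))" using st s by simp
  qed
qed

lemma asc_V: assumes "1 \<le> j" "decp k u j" "incp k u j"
  shows "asc k u = length u - j"
proof -
  have "{s. s + 1 < length u \<and> I_less k (set u) (u ! s) (u ! (s + 1))} = {j - 1..<length u - 1}"
  proof (rule set_eqI, rule iffI)
    fix s assume "s \<in> {s. s + 1 < length u \<and> I_less k (set u) (u ! s) (u ! (s + 1))}"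
    then have s: "s + 1 < length u" "I_less k (set u) (u ! s) (u ! (s + 1))" by auto
    have "\<not> s + 1 < j"
    proof
      assume "s + 1 < j"
      then have "I_less k (set u) (u ! (s + 1)) (u ! s)" using assms(2) unfolding decp_def by blast
      then show False using s(2) I_less_asym by blast
    qed
    then show "s \<in> {j - 1..<length u - 1}" using s by auto
  next
    fix s assume "s \<in> {j - 1..<length u - 1}"
    then have "j \<le> s + 1 \<and> s + 1 < length u" using assms(1) by auto
    then show "s \<in> {s. s + 1 < length u \<and> I_less k (set u) (u ! s) (u ! (s + 1))}"
      using assms(3) unfolding incp_def by blast
  qed
  then show ?thesis unfolding asc_def using assms(1) by simp
qed

lemma asc_U: assumes "1 \<le> j" "j + 1 \<le> length u" "decp k u j" "u ! (j - 1) = u ! j" "incp k u (j + 1)"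
  shows "asc k u = length u - j - 1"
proof -
  have "{s. s + 1 < length u \<and> I_less k (set u) (u ! s) (u ! (s + 1))} = {j..<length u - 1}"
  proof (rule set_eqI, rule iffI)
    fix s assume "s \<in> {s. s + 1 < length u \<and> I_less k (set u) (u ! s) (u ! (s + 1))}"
    then have s: "s + 1 < length u" "I_less k (set u) (u ! s) (u ! (s + 1))" by auto
    have "\<not> s + 1 < j"
    proof
      assume "s + 1 < j"
      then have "I_less k (set u) (u ! (s + 1)) (u ! s)" using assms(3) unfolding decp_def by blast
      then show False using s(2) I_less_asym by blast
    qed
    moreover have "s \<noteq> j - 1"
    proof
      assume "s = j - 1"
      then have "u ! s = u ! (s + 1)" using assms(1,4) by simp
      then show False using s(2) I_less_irrefl by metis
    qed
    ultimately show "s \<in> {j..<length u - 1}" using s by auto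
  next
    fix s assume "s \<in> {j..<length u - 1}"
    then have "j + 1 \<le> s + 1 \<and> s + 1 < length u" using assms(1) by auto
    then show "s \<in> {s. s + 1 < length u \<and> I_less k (set u) (u ! s) (u ! (s + 1))}"
      using assms(5) unfolding incp_def by blast
  qed
  then show ?thesis unfolding asc_def by simp
qed

lemma hookV_intro: assumes "set u \<subset> {0..k}" "1 \<le> j" "j \<le> max (length u) 1"
  "sorted_wrt (Rdec k (set u)) (take j u)" "sorted_wrt (Rinc k (set u)) (drop (j - 1) u)"
  shows "hookV k u" "asc k u = length u - j"
proof -
  have d: "decp k u j" using decp_sorted[OF assms(3)] assms(4) by simp
  have i: "incp k u j" using incp_sorted[OF assms(2)] assms(5) by simp
  show "hookV k u" unfolding hookV_iff using assms(1,2,3) d i by blast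
  show "asc k u = length u - j" using asc_V[OF assms(2) d i] .
qed

lemma hookU_intro: assumes "set u \<subset> {0..k}" "1 \<le> j" "j + 1 \<le> length u"
  "sorted_wrt (Rdec k (set u)) (take j u)" "u ! (j - 1) = u ! j" "sorted_wrt (Rinc k (set u)) (drop j u)"
  shows "hookU k u" "asc k u = length u - j - 1"
proof -
  have d: "decp k u j" using decp_sorted[of j u k] assms(3,4) by simp
  have i: "incp k u (j + 1)" using incp_sorted[of "j + 1" k u] assms(6) by simp
  show "hookU k u" unfolding hookU_iff using assms(1,2,3,5) d i by blast
  show "asc k u = length u - j - 1" using asc_U[OF assms(2,3) d assms(5) i] .
qed

definition Cset :: "nat \<Rightarrow> nat \<Rightarrow> nat set set" where
  "Cset k s = {A. A \<subseteq> {0..k} \<and> card A = s}"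

definition fAB :: "nat \<Rightarrow> nat set \<times> nat set \<Rightarrow> nat list" where
  "fAB k AB = descL k (fst AB \<union> snd AB) (fst AB) @ ascL k (fst AB \<union> snd AB) (snd AB)"

lemma S_proper: assumes "A \<subseteq> {0..k}" "B \<subseteq> {0..k}" "card A + card B \<le> k"
  shows "A \<union> B \<subset> {0..k}"
proof -
  have "card (A \<union> B) \<le> card A + card B" by (rule card_Un_le)
  then have "card (A \<union> B) < card {0..k}" using assms(3) by simp
  then show ?thesis using assms(1,2) by auto
qed

lemma sorted_strict_distinct: "(\<And>x. \<not> R x x) \<Longrightarrow> sorted_wrt R xs \<Longrightarrow> distinct xs"
  by (induction xs) auto

lemma fin_sub: "A \<subseteq> {0..(k::nat)} \<Longrightarrow> finite A" by (rule finite_subset[of _ "{0..k}"]) auto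

lemma image_sub:
  assumes AB: "A \<in> Cset k (r - i)" "B \<in> Cset k i" and ir: "i \<le> r" "r \<le> k"
  shows "fAB k (A, B) \<in> Vset k r (int i) \<union> Vset k r (int i - 1) \<union> Uset k r (int i - 1)"
proof -
  define p where "p = r - i"
  define S where "S = A \<union> B"
  define D where "D = descL k S A"
  define C where "C = ascL k S B"
  define u where "u = D @ C"
  have Ak: "A \<subseteq> {0..k}" "card A = p" using AB unfolding Cset_def p_def by auto
  have Bk: "B \<subseteq> {0..k}" "card B = i" using AB unfolding Cset_def by auto
  have finA: "finite A" and finB: "finite B" using fin_sub Ak(1) Bk(1) by blast+
  have Sp: "S \<subset> {0..k}" unfolding S_def by (rule S_proper) (use Ak Bk ir p_def in auto)
  have lD: "length D = p" unfolding D_def using descL_length[OF finA] Ak by simp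
  have lC: "length C = i" unfolding C_def using ascL_length[OF finB] Bk by simp
  have sD: "set D = A" unfolding D_def using descL_set[OF finA] .
  have sC: "set C = B" unfolding C_def using ascL_set[OF finB] .
  have su: "set u = S" unfolding u_def S_def using sD sC by simp
  have lu: "length u = r" unfolding u_def using lD lC p_def ir by simp
  have uk: "set u \<subset> {0..k}" using su Sp by simp
  have soD: "sorted_wrt (Rdec k S) D" unfolding D_def by (rule descL_sorted) (use Sp S_def in auto)
  have soC: "sorted_wrt (Rinc k S) C" unfolding C_def by (rule ascL_sorted) (use Sp S_def in auto)
  have fu: "fAB k (A, B) = u" unfolding fAB_def u_def D_def C_def S_def by simp
  have tD: "take p u = D" unfolding u_def using lD by simp
  have dC: "drop p u = C" unfolding u_def using lD by simp
  show ?thesis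
  proof (cases "i = 0")
    case True
    then have "C = []" using lC by simp
    then have uD: "u = D" unfolding u_def by simp
    have "hookV k u" "asc k u = length u - max p 1"
    proof -
      have "take (max p 1) u = u" using lD uD by simp
      then have a: "sorted_wrt (Rdec k (set u)) (take (max p 1) u)" using soD uD su by simp
      have "length (drop (max p 1 - 1) u) \<le> 1" using lD uD by simp
      then have b: "sorted_wrt (Rinc k (set u)) (drop (max p 1 - 1) u)" by (rule sorted_wrt01)
      show "hookV k u" "asc k u = length u - max p 1"
        using hookV_intro[OF uk _ _ a b] lu lD uD by auto
    qed
    then show ?thesis unfolding fu Vset_def using True lu lD uD by auto
  next
    case inz: False
    show ?thesis
    proof (cases "p = 0")
      case True
      then have "D = []" using lD by simp
      then have uC: "u = C" unfolding u_def by simp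
      have a: "sorted_wrt (Rdec k (set u)) (take 1 u)" by (rule sorted_wrt01) simp
      have b: "sorted_wrt (Rinc k (set u)) (drop (1 - 1) u)" using soC uC su by simp
      have "hookV k u" "asc k u = length u - 1"
        using hookV_intro[OF uk _ _ a b] by auto
      then show ?thesis unfolding fu Vset_def using inz lu lC uC by auto
    next
      case pnz: False
      define d where "d = last D"
      define c where "c = hd C"
      have Dne: "D \<noteq> []" using lD pnz by auto
      have Cne: "C \<noteq> []" using lC inz by auto
      have Dsplit: "D = butlast D @ [d]" unfolding d_def using Dne by simp
      have Csplit: "C = c # tl C" unfolding c_def using Cne by simp
      have dA: "d \<in> A" using Dne sD d_def by auto
      have cB: "c \<in> B" using Cne sC c_def by auto
      have dbig: "\<forall>x\<in>set (butlast D). I_less k S d x"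
        using soD Dsplit by (metis sorted_wrt_append list.set_intros(1))
      have csmall: "\<forall>y\<in>set (tl C). I_less k S c y"
        using soC Csplit by (metis sorted_wrt.simps(2))
      have lbD: "length (butlast D) = p - 1" using lD by simp
      have dk: "d \<le> k" "c \<le> k" using dA cB Ak Bk by auto
      have tot: "I_less k S d c \<or> d = c \<or> I_less k S c d" using I_less_total[OF Sp dk] .
      show ?thesis
      proof (cases "I_less k S d c")
        case True
        have a: "sorted_wrt (Rdec k (set u)) (take p u)" using tD soD su by simp
        have "drop (p - 1) u = d # C"
          unfolding u_def by (subst Dsplit) (use lbD in simp)
        moreover have "sorted_wrt (Rinc k S) (d # C)"
          using soC csmall True Csplit I_less_trans by (metis set_ConsD sorted_wrt.simps(2))
        ultimately have b: "sorted_wrt (Rinc k (set u)) (drop (p - 1) u)" using su by simp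
        have "hookV k u" "asc k u = length u - p"
          using hookV_intro[OF uk _ _ a b] pnz lu lD p_def ir by auto
        then show ?thesis unfolding fu Vset_def using lu p_def ir by auto
      next
        case nlt: False
        show ?thesis
        proof (cases "d = c")
          case True
          have a: "sorted_wrt (Rdec k (set u)) (take p u)" using tD soD su by simp
          have b: "sorted_wrt (Rinc k (set u)) (drop p u)" using dC soC su by simp
          have e1: "u ! (p - 1) = d" unfolding u_def d_def using lD Dne pnz
            by (simp add: nth_append last_conv_nth)
          have e2: "u ! p = c" unfolding u_def c_def using lD Cne by (simp add: nth_append hd_conv_nth)
          have "hookU k u" "asc k u = length u - p - 1"
            using hookU_intro[OF uk _ _ a _ b] pnz lu lD p_def ir e1 e2 True inz by auto
          then show ?thesis unfolding fu Uset_def using lu p_def ir inz by auto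
        next
          case False
          then have lt: "I_less k S c d" using tot nlt by blast
          have t1: "take 1 C = [c]" using Cne unfolding c_def by (cases C) auto
          have "take (p + 1) u = D @ take 1 C" unfolding u_def using lD by simp
          then have "take (p + 1) u = D @ [c]" using t1 by simp
          moreover have "sorted_wrt (Rdec k S) (D @ [c])"
          proof -
            have "\<forall>x\<in>set D. I_less k S c x"
            proof
              fix x assume "x \<in> set D"
              then have "x \<in> set (butlast D @ [d])" using Dsplit by simp
              then have "x = d \<or> x \<in> set (butlast D)" by auto
              then show "I_less k S c x" using lt dbig I_less_trans by blast
            qed
            then show ?thesis using soD by (simp add: sorted_wrt_append)
          qed
          ultimately have a: "sorted_wrt (Rdec k (set u)) (take (p + 1) u)" using su by simp
          have b: "sorted_wrt (Rinc k (set u)) (drop (p + 1 - 1) u)" using dC soC su by simp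
          have "hookV k u" "asc k u = length u - (p + 1)"
            using hookV_intro[OF uk _ _ a b] lu lD p_def ir inz by auto
          then show ?thesis unfolding fu Vset_def using lu p_def ir inz by auto
        qed
      qed
    qed
  qed
qed

lemma W_in_image: assumes uk: "set u \<subset> {0..k}" and lu: "length u = r" and pr: "p \<le> r"
  and a: "sorted_wrt (Rdec k (set u)) (take p u)" and b: "sorted_wrt (Rinc k (set u)) (drop p u)"
  shows "u \<in> fAB k ` (Cset k p \<times> Cset k (r - p))"
proof -
  define A where "A = set (take p u)"
  define B where "B = set (drop p u)"
  have AB: "A \<union> B = set u" unfolding A_def B_def
    by (metis set_append append_take_drop_id)
  have dA: "distinct (take p u)" using sorted_strict_distinct[OF _ a] I_less_irrefl by blast
  have dB: "distinct (drop p u)" using sorted_strict_distinct[OF _ b] I_less_irrefl by blast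
  have cA: "card A = p" unfolding A_def using distinct_card[OF dA] lu pr by simp
  have cB: "card B = r - p" unfolding B_def using distinct_card[OF dB] lu by simp
  have Ak: "A \<subseteq> {0..k}" "B \<subseteq> {0..k}" using AB uk by auto
  have e1: "take p u = descL k (set u) A"
    by (rule descL_unique[OF a]) (use A_def AB uk in auto)
  have e2: "drop p u = ascL k (set u) B"
    by (rule ascL_unique[OF b]) (use B_def AB uk in auto)
  have "fAB k (A, B) = take p u @ drop p u" unfolding fAB_def using e1 e2 AB by simp
  then have "fAB k (A, B) = u" by simp
  moreover have "(A, B) \<in> Cset k p \<times> Cset k (r - p)" unfolding Cset_def using cA cB Ak by auto
  ultimately show ?thesis by force
qed

lemma union_sub_image: assumes ir: "i \<le> r"
  shows "Vset k r (int i) \<union> Vset k r (int i - 1) \<union> Uset k r (int i - 1) \<subseteq> fAB k ` (Cset k (r - i) \<times> Cset k i)"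
proof
  fix u assume u: "u \<in> Vset k r (int i) \<union> Vset k r (int i - 1) \<union> Uset k r (int i - 1)"
  have ri: "r - (r - i) = i" using ir by simp
  have goal: "u \<in> fAB k ` (Cset k (r - i) \<times> Cset k (r - (r - i)))"
  proof (cases "u \<in> Vset k r (int i)")
    case True
    then have hv: "hookV k u" and lu: "length u = r" and au: "asc k u = i" unfolding Vset_def by auto
    obtain j where j: "set u \<subset> {0..k}" "1 \<le> j" "j \<le> max (length u) 1" "decp k u j" "incp k u j"
      using hv unfolding hookV_iff by blast
    have asc: "asc k u = length u - j" by (rule asc_V[OF j(2,4,5)])
    show ?thesis
    proof (cases "r = 0")
      case True
      then have "u = []" using lu by simp
      then show ?thesis using W_in_image[of u k r "r - i"] j(1) lu by simp
    next
      case False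
      then have jp: "j = r - i" using j(3) lu asc au by auto
      have a: "sorted_wrt (Rdec k (set u)) (take (r - i) u)" using decp_sorted[OF j(3)] j(4) jp by simp
      have "sorted_wrt (Rinc k (set u)) (drop (j - 1) u)" using incp_sorted[OF j(2)] j(5) by simp
      then have "sorted_wrt (Rinc k (set u)) (drop 1 (drop (j - 1) u))" by (rule sorted_wrt_drop)
      moreover have "drop 1 (drop (j - 1) u) = drop j u" using j(2) by simp
      ultimately have b: "sorted_wrt (Rinc k (set u)) (drop (r - i) u)" using jp by simp
      show ?thesis by (rule W_in_image[OF j(1) lu _ a b]) simp
    qed
  next
    case nV: False
    show ?thesis
    proof (cases "u \<in> Vset k r (int i - 1)")
      case True
      then have hv: "hookV k u" and lu: "length u = r" and au: "int (asc k u) = int i - 1" unfolding Vset_def by auto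
      obtain j where j: "set u \<subset> {0..k}" "1 \<le> j" "j \<le> max (length u) 1" "decp k u j" "incp k u j"
        using hv unfolding hookV_iff by blast
      have asc: "asc k u = length u - j" by (rule asc_V[OF j(2,4,5)])
      have i1: "i \<ge> 1" using au by linarith
      have r1: "r \<ge> 1" using i1 ir by simp
      have jp: "j = r - i + 1" using j(3) lu asc au i1 r1 ir by auto
      have "sorted_wrt (Rdec k (set u)) (take j u)" using decp_sorted[OF j(3)] j(4) by simp
      then have "sorted_wrt (Rdec k (set u)) (take (r - i) (take j u))" by (rule sorted_wrt_take)
      then have a: "sorted_wrt (Rdec k (set u)) (take (r - i) u)" using jp by (simp add: min_def)
      have b: "sorted_wrt (Rinc k (set u)) (drop (r - i) u)" using incp_sorted[OF j(2)] j(5) jp by simp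
      show ?thesis by (rule W_in_image[OF j(1) lu _ a b]) simp
    next
      case False
      then have "u \<in> Uset k r (int i - 1)" using u nV by blast
      then have hu: "hookU k u" and lu: "length u = r" and au: "int (asc k u) = int i - 1" unfolding Uset_def by auto
      obtain j where j: "set u \<subset> {0..k}" "1 \<le> j" "j + 1 \<le> length u" "decp k u j" "u ! (j - 1) = u ! j" "incp k u (j + 1)"
        using hu unfolding hookU_iff by blast
      have asc: "asc k u = length u - j - 1" by (rule asc_U[OF j(2,3,4,5,6)])
      have i1: "i \<ge> 1" using au by linarith
      have jp: "j = r - i" using j(3) lu asc au i1 ir by auto
      have a: "sorted_wrt (Rdec k (set u)) (take (r - i) u)" using decp_sorted[of j u k] j(3,4) jp by simp
      have b: "sorted_wrt (Rinc k (set u)) (drop (r - i) u)" using incp_sorted[of "j + 1" k u] j(6) jp by simp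
      show ?thesis by (rule W_in_image[OF j(1) lu _ a b]) simp
    qed
  qed
  then show "u \<in> fAB k ` (Cset k (r - i) \<times> Cset k i)" using ri by simp
qed

lemma VU_disj: "Vset k r a \<inter> Uset k r b = {}"
proof (rule ccontr)
  assume "Vset k r a \<inter> Uset k r b \<noteq> {}"
  then obtain u where hv: "hookV k u" and hu: "hookU k u" unfolding Vset_def Uset_def by auto
  obtain j where j: "1 \<le> j" "decp k u j" "incp k u j" using hv unfolding hookV_iff by blast
  obtain j0 where j0: "1 \<le> j0" "j0 + 1 \<le> length u" "u ! (j0 - 1) = u ! j0"
    using hu unfolding hookU_iff by blast
  show False
  proof (cases "j0 < j")
    case True
    then have "(j0 - 1) + 1 < j" using j0(1) by simp
    then have "I_less k (set u) (u ! (j0 - 1 + 1)) (u ! (j0 - 1))" using j(2) unfolding decp_def by blast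
    then show False using j0 I_less_irrefl by simp
  next
    case False
    then have "j \<le> (j0 - 1) + 1 \<and> (j0 - 1) + 1 < length u" using j0(1,2) by simp
    then have "I_less k (set u) (u ! (j0 - 1)) (u ! (j0 - 1 + 1))" using j(3) unfolding incp_def by blast
    then show False using j0 I_less_irrefl by simp
  qed
qed

lemma V_fin: "finite (Vset k r a)"
  by (rule finite_subset[of _ "{xs. set xs \<subseteq> {0..k} \<and> length xs = r}"])
     (auto simp: Vset_def hookV_def intro: finite_lists_length_eq)

lemma U_fin: "finite (Uset k r a)"
  by (rule finite_subset[of _ "{xs. set xs \<subseteq> {0..k} \<and> length xs = r}"])
     (auto simp: Uset_def hookU_def intro: finite_lists_length_eq)

lemma Cset_fin: "finite (Cset k s)"
  by (rule finite_subset[of _ "Pow {0..k}"]) (auto simp: Cset_def)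

lemma fAB_inj: "inj_on (fAB k) (Cset k p \<times> Cset k q)"
proof (rule inj_onI)
  fix x y assume x: "x \<in> Cset k p \<times> Cset k q" and y: "y \<in> Cset k p \<times> Cset k q" and e: "fAB k x = fAB k y"
  obtain A B where xAB: "x = (A, B)" by fastforce
  obtain A' B' where yAB: "y = (A', B')" by fastforce
  have fin: "finite A" "finite B" "finite A'" "finite B'" "card A = p" "card A' = p"
    using x y xAB yAB fin_sub unfolding Cset_def by auto
  have l1: "length (descL k (A \<union> B) A) = p" using descL_length fin by simp
  have l2: "length (descL k (A' \<union> B') A') = p" using descL_length fin by simp
  have "take p (fAB k x) = descL k (A \<union> B) A" "drop p (fAB k x) = ascL k (A \<union> B) B"
    unfolding xAB fAB_def using l1 by auto
  moreover have "take p (fAB k y) = descL k (A' \<union> B') A'" "drop p (fAB k y) = ascL k (A' \<union> B') B'"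
    unfolding yAB fAB_def using l2 by auto
  ultimately have "descL k (A \<union> B) A = descL k (A' \<union> B') A'" "ascL k (A \<union> B) B = ascL k (A' \<union> B') B'"
    using e by metis+
  then have "A = A'" "B = B'" using descL_set ascL_set fin by metis+
  then show "x = y" using xAB yAB by simp
qed

theorem lemma7p4:
  fixes k i r :: nat
  assumes "i \<le> r" and "r \<le> k"
  shows "A_eq k (amul (h_sym k (r - i)) (e_sym k i))
           (wsum (Vset k r (int i)) + wsum (Vset k r (int i - 1)) + wsum (Uset k r (int i - 1)))"
proof -
  define p where "p = r - i"
  define P where "P = Cset k p \<times> Cset k i"
  have h: "h_sym k p = (\<Sum>A\<in>Cset k p. word (d_word k A))" unfolding h_sym_def Cset_def by simp
  have e: "e_sym k i = (\<Sum>B\<in>Cset k i. word (rev (d_word k B)))" unfolding e_sym_def Cset_def by simp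
  have L: "amul (h_sym k p) (e_sym k i) = (\<Sum>(A, B)\<in>P. word (d_word k A @ rev (d_word k B)))"
  proof -
    have "amul (h_sym k p) (e_sym k i) = (\<Sum>A\<in>Cset k p. amul (word (d_word k A)) (e_sym k i))"
      unfolding h by (rule amul_sum_left)
    also have "\<dots> = (\<Sum>A\<in>Cset k p. \<Sum>B\<in>Cset k i. word (d_word k A @ rev (d_word k B)))"
      unfolding e amul_sum_right amul_word ..
    also have "\<dots> = (\<Sum>(A, B)\<in>P. word (d_word k A @ rev (d_word k B)))"
      unfolding P_def by (rule sum.cartesian_product)
    finally show ?thesis .
  qed
  have M: "A_eq k (\<Sum>(A, B)\<in>P. word (d_word k A @ rev (d_word k B))) (\<Sum>x\<in>P. word (fAB k x))"
  proof (rule A_eq_sum)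
    fix x assume x: "x \<in> P"
    obtain A B where xAB: "x = (A, B)" by fastforce
    have Ak: "A \<subseteq> {0..k}" "B \<subseteq> {0..k}" "card A + card B \<le> k"
      using x xAB assms unfolding P_def Cset_def p_def by auto
    define S where "S = A \<union> B"
    have Sp: "S \<subset> {0..k}" unfolding S_def by (rule S_proper[OF Ak])
    have s1: "swq k (d_word k A) (descL k S A)" by (rule d_word_swq) (use Sp S_def in auto)
    have s2: "swq k (rev (d_word k B)) (ascL k S B)" by (rule rev_d_word_swq) (use Sp S_def in auto)
    have "A \<subset> {0..k}" "B \<subset> {0..k}" using Sp S_def by auto
    then have st: "set (d_word k A) = A" "set (d_word k B) = B"
      using d_word_dec unfolding dec_order_def by blast+
    have "swq k (d_word k A @ rev (d_word k B)) (descL k S A @ ascL k S B)"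
      by (rule swq_app[OF s1 s2]) (use st Ak in auto)
    then have "A_eq k (word (d_word k A @ rev (d_word k B))) (word (descL k S A @ ascL k S B))"
      by (rule swq_A_eq)
    then show "A_eq k ((\<lambda>(A, B). word (d_word k A @ rev (d_word k B))) x) (word (fAB k x))"
      unfolding xAB fAB_def S_def by simp
  qed
  have img: "fAB k ` P = Vset k r (int i) \<union> Vset k r (int i - 1) \<union> Uset k r (int i - 1)"
  proof
    show "fAB k ` P \<subseteq> Vset k r (int i) \<union> Vset k r (int i - 1) \<union> Uset k r (int i - 1)"
    proof
      fix u assume "u \<in> fAB k ` P"
      then obtain A B where AB: "(A, B) \<in> P" "u = fAB k (A, B)" by auto
      show "u \<in> Vset k r (int i) \<union> Vset k r (int i - 1) \<union> Uset k r (int i - 1)"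
        unfolding AB(2) by (rule image_sub) (use AB(1) assms in \<open>auto simp: P_def p_def\<close>)
    qed
    show "Vset k r (int i) \<union> Vset k r (int i - 1) \<union> Uset k r (int i - 1) \<subseteq> fAB k ` P"
      unfolding P_def p_def by (rule union_sub_image[OF assms(1)])
  qed
  have d1: "Vset k r (int i) \<inter> Vset k r (int i - 1) = {}" unfolding Vset_def by auto
  have d2: "(Vset k r (int i) \<union> Vset k r (int i - 1)) \<inter> Uset k r (int i - 1) = {}"
    using VU_disj by blast
  have R: "(\<Sum>x\<in>P. word (fAB k x)) = wsum (Vset k r (int i)) + wsum (Vset k r (int i - 1)) + wsum (Uset k r (int i - 1))"
  proof -
    have "(\<Sum>x\<in>P. word (fAB k x)) = (\<Sum>u\<in>fAB k ` P. word u)"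
      unfolding P_def by (simp add: sum.reindex[OF fAB_inj])
    also have "\<dots> = (\<Sum>u\<in>Vset k r (int i) \<union> Vset k r (int i - 1). word u) + (\<Sum>u\<in>Uset k r (int i - 1). word u)"
      unfolding img by (rule sum.union_disjoint) (use V_fin U_fin d2 in auto)
    also have "(\<Sum>u\<in>Vset k r (int i) \<union> Vset k r (int i - 1). word u) =
       (\<Sum>u\<in>Vset k r (int i). word u) + (\<Sum>u\<in>Vset k r (int i - 1). word u)"
      by (rule sum.union_disjoint) (use V_fin d1 in auto)
    finally show ?thesis unfolding wsum_def .
  qed
  show ?thesis using M unfolding L[symmetric] R p_def .
qed

end
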